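(* Let $\lambda$ be a Perron number and let $f_\lambda:\ast_{mM}\to\ast_{mM}$ be the star map constructed below. Then its split map $S(f_\lambda):S(\ast_{mM})\to S(\ast_{mM})$ is mixing; i.e. for every edge $y_I$ of $S(\ast_{mM})$ there exists $L$ such that the edge path $S(f_\lambda)^L(y_I)$ traverses every edge of $S(\ast_{mM})$.
   Context: A Perron number is a real algebraic integer $\lambda$ with $\lambda>|\lambda_i|$ for every other Galois conjugate $\lambda_i$. Construction of $f_\lambda$: let $d=\deg\lambda$, $\mathcal{O}_\lambda$ the ring of integers of $\mathbb{Q}(\lambda)$, $V_\lambda=\mathbb{Q}(\lambda)\otimes_{\mathbb{Q}}\mathbb{R}\cong\mathbb{R}^d$, on which multiplication by $\lambda$ is linear with unit eigenvectors $v_1,\dots,v_d$, $v_1$ for the eigenvalue $\lambda$. Let $K_\lambda=\{\sum a_iv_i: a_1>0,\ a_1>|a_i|\ (i\ge2)\}$, let $KR_\lambda$ be a closed convex polyhedral cone generated by finitely many elements of $\mathcal{O}_\lambda$ with $\lambda K_\lambda\subset KR_\lambda\subset K_\lambda$, and $S_\lambda=(\mathcal{O}_\lambda\cap KR_\lambda)\setminus\{0\}$, an additive semigroup generated by finitely many elements $s_1,\dots,s_m$ (viewed as positive real numbers via $\mathbb{Q}(\lambda)\subset\mathbb{R}$). Choose positive integers $N>n_0$ with $\lambda^N\equiv\lambda^{n_0}\pmod{2\mathcal{O}_\lambda}$; put $T=s_1+\dots+s_m$ and $g_k=\lambda^{n_0}s_k+2(T+\lambda s_k)$. Choose an integer $p\ge0$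 so that $M=p(N-n_0)+N$ satisfies $\lambda^Ms_k\in g_k+S_\lambda$ for all $k$; then there are nonnegative integers $e^{(k)}_i$ with $\lambda^Ms_k=\sum_{i=1}^m(2e^{(k)}_i+2)s_i+2\lambda s_k+\lambda^{n_0}s_k$. The star $\ast_{mM}=K_{1,mM}$ has edges $(s_k,i)$, $1\le k\le m$, $1\le i\le M$, oriented from center to tip, of length $\lambda^{i-1}s_k$. The graph map $f_\lambda$ fixes the center, sends $(s_k,i)\mapsto(s_k,i+1)$ for $i<M$, and sends $(s_k,M)$ to the edge path which first traverses $(s_k,1)$ back and forth $e^{(k)}_k+1$ times (i.e. $2e^{(k)}_k+2$ traversals), then, for each $j\ne k$ in some fixed order, traverses $(s_j,1)$ back and forth $e^{(k)}_j+1$ times, then traverses $(s_k,2)$ out and back once, and finally traverses $(s_k,n_0+1)$ once. Split map: prototype graph $P_7$ has vertices $v_0,v_1$ and edges $a,\dots,g$ oriented $v_0\to v_1$ (uppercase = reversed); $\phi_1=\mathrm{id}$ and for $m'\ge0$, $\phi_{3+2m'}$: $a\mapsto aG(aB)^{m'}a$, $b\mapsto bD(bC)^{m'}b$, $c\mapsto cF(cA)^{m'}c$, $d\mapsto aB(aB)^{m'}a$, $e\mapsto cB(aB)^{m'}a$, $f\mapsto aC(aB)^{m'}a$, $g\mapsto bE(bA)^{m'}b$. The split graph replaces each edge $x_I$ of the star by seven parallel edges $a_I,\dots,g_I$; the split map sends $y_I$ to the path obtained from the word $\phi_{\ell}(y)$, $\ell$ the number of edges of $f_\lambda(x_I)$,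 by giving its $t$-th letter the subscript of the $t$-th edge of $f_\lambda(x_I)$. A graph map is mixing if some positive power of its transition matrix (entry $(i,j)$ = number of times edge $i$ occurs in the image path of edge $j$) is positive. *)

theory Defs
  imports Complex_Main "HOL-Computational_Algebra.Computational_Algebra"
begin

definition alg_integer :: "real \<Rightarrow> bool" where
  "alg_integer x \<longleftrightarrow> (\<exists>p :: int poly. lead_coeff p = 1 \<and> poly (map_poly of_int p) x = 0)"

definition galois_conjugates :: "real \<Rightarrow> complex set" where
  "galois_conjugates l = {z. \<exists>p :: rat poly. irreducible p \<and>
       poly (map_poly of_rat p) l = 0 \<and> poly (map_poly of_rat p) z = 0}"

definition perron :: "real \<Rightarrow> bool" where
  "perron l \<longleftrightarrow> alg_integer l \<and>
     (\<forall>z \<in> galois_conjugates l. z \<noteq> complex_of_real l \<longrightarrow> cmod z < l)"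

definition Qfield :: "real \<Rightarrow> real set" where
  "Qfield l = {poly (map_poly of_rat q) l | q :: rat poly. True}"

definition ring_of_integers :: "real \<Rightarrow> real set" where
  "ring_of_integers l = {x \<in> Qfield l. alg_integer x}"

text \<open>A graph map is given by a finite set of (oriented) edges and, for every edge,
  its image edge path: a list of (edge, orientation) pairs, True = traversed along
  the orientation, False = traversed backwards (uppercase letter).\<close>

definition trans_entry :: "('e \<Rightarrow> ('e \<times> bool) list) \<Rightarrow> 'e \<Rightarrow> 'e \<Rightarrow> nat" where
  "trans_entry img i j = count_list (map fst (img j)) i"

fun trans_pow :: "'e set \<Rightarrow> ('e \<Rightarrow> ('e \<times> bool) list) \<Rightarrow> nat \<Rightarrow> 'e \<Rightarrow> 'e \<Rightarrow> nat" where
  "trans_pow E img 0 i j = (if i = j then 1 else 0)"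
| "trans_pow E img (Suc n) i j = (\<Sum>w\<in>E. trans_entry img i w * trans_pow E img n w j)"

definition mixing :: "'e set \<Rightarrow> ('e \<Rightarrow> ('e \<times> bool) list) \<Rightarrow> bool" where
  "mixing E img \<longleftrightarrow> (\<exists>L > 0. \<forall>i\<in>E. \<forall>j\<in>E. trans_pow E img L i j > 0)"

text \<open>Edges of the star are pairs (k,i), 0 <= k < m (index of s_k, 0-based), 1 <= i <= M.\<close>
definition star_edges :: "nat \<Rightarrow> nat \<Rightarrow> (nat \<times> nat) set" where
  "star_edges m M = {(k, i). k < m \<and> 1 \<le> i \<and> i \<le> M}"

definition back_forth :: "nat \<Rightarrow> nat \<times> nat \<Rightarrow> ((nat \<times> nat) \<times> bool) list" where
  "back_forth r x = concat (replicate r [(x, True), (x, False)])"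

text \<open>e k j = e^{(k)}_j ; ord k = the fixed order of the indices j ~= k.\<close>
definition star_img ::
  "nat \<Rightarrow> nat \<Rightarrow> (nat \<Rightarrow> nat \<Rightarrow> nat) \<Rightarrow> (nat \<Rightarrow> nat list) \<Rightarrow> nat \<times> nat \<Rightarrow> ((nat \<times> nat) \<times> bool) list" where
  "star_img M n0 e ord x = (case x of (k, i) \<Rightarrow>
     if i < M then [((k, i + 1), True)]
     else back_forth (e k k + 1) (k, 1)
          @ concat (map (\<lambda>j. back_forth (e k j + 1) (j, 1)) (ord k))
          @ [((k, 2), True), ((k, 2), False), ((k, n0 + 1), True)])"

datatype letter = La | Lb | Lc | Ld | Le | Lf | Lg

text \<open>(x, True) = lowercase letter x, (x, False) = uppercase (reversed) letter.\<close>
definition rep :: "nat \<Rightarrow> 'a list \<Rightarrow> 'a list" where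
  "rep n w = concat (replicate n w)"

definition phi_odd :: "nat \<Rightarrow> letter \<Rightarrow> (letter \<times> bool) list" where
  "phi_odd m' y = (case y of
      La \<Rightarrow> [(La,True),(Lg,False)] @ rep m' [(La,True),(Lb,False)] @ [(La,True)]
    | Lb \<Rightarrow> [(Lb,True),(Ld,False)] @ rep m' [(Lb,True),(Lc,False)] @ [(Lb,True)]
    | Lc \<Rightarrow> [(Lc,True),(Lf,False)] @ rep m' [(Lc,True),(La,False)] @ [(Lc,True)]
    | Ld \<Rightarrow> [(La,True),(Lb,False)] @ rep m' [(La,True),(Lb,False)] @ [(La,True)]
    | Le \<Rightarrow> [(Lc,True),(Lb,False)] @ rep m' [(La,True),(Lb,False)] @ [(La,True)]
    | Lf \<Rightarrow> [(La,True),(Lc,False)] @ rep m' [(La,True),(Lb,False)] @ [(La,True)]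
    | Lg \<Rightarrow> [(Lb,True),(Le,False)] @ rep m' [(Lb,True),(La,False)] @ [(Lb,True)])"

text \<open>phi_1 = id, phi_{3+2m'} as above (only these lengths occur).\<close>
definition phi :: "nat \<Rightarrow> letter \<Rightarrow> (letter \<times> bool) list" where
  "phi l y = (if l = 1 then [(y, True)] else phi_odd ((l - 3) div 2) y)"

definition split_edges :: "nat \<Rightarrow> nat \<Rightarrow> (letter \<times> (nat \<times> nat)) set" where
  "split_edges m M = UNIV \<times> star_edges m M"

text \<open>The t-th letter of phi_l(y) gets the subscript of the t-th edge of f(x_I).\<close>
definition split_img ::
  "nat \<Rightarrow> nat \<Rightarrow> (nat \<Rightarrow> nat \<Rightarrow> nat) \<Rightarrow> (nat \<Rightarrow> nat list) \<Rightarrow> letter \<times> (nat \<times> nat)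
     \<Rightarrow> ((letter \<times> (nat \<times> nat)) \<times> bool) list" where
  "split_img M n0 e ord yx = (case yx of (y, x) \<Rightarrow>
     (let p = star_img M n0 e ord x in
        map2 (\<lambda>(z, ori) (ed, _). ((z, ed), ori)) (phi (length p) y) p))"

end

theory Submission
  imports Defs
begin

definition rch :: "'e set \<Rightarrow> ('e \<Rightarrow> ('e \<times> bool) list) \<Rightarrow> nat \<Rightarrow> 'e \<Rightarrow> 'e \<Rightarrow> bool" where
  "rch E img n j i \<longleftrightarrow> 0 < trans_pow E img n i j"

lemma tp_Suc_pos:
  assumes "finite E"
  shows "0 < trans_pow E img (Suc n) i j \<longleftrightarrow> (\<exists>u\<in>E. 0 < trans_entry img i u \<and> 0 < trans_pow E img n u j)"
  using assms by (simp add: sum_eq_0_iff flip: neq0_conv)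

lemma rch_comp:
  assumes "finite E" "rch E img k j w" "rch E img n w i"
  shows "rch E img (n + k) j i"
  using assms(3)
proof (induction n arbitrary: i)
  case 0
  then show ?case using assms(2) by (simp add: rch_def split: if_splits)
next
  case (Suc n)
  then obtain u where "u \<in> E" "0 < trans_entry img i u" "0 < trans_pow E img n u w"
    using tp_Suc_pos[OF assms(1)] by (auto simp: rch_def)
  with Suc.IH[of u] have "rch E img (n + k) j u" by (simp add: rch_def)
  then show ?case using tp_Suc_pos[OF assms(1)] \<open>u \<in> E\<close> \<open>0 < trans_entry img i u\<close>
    by (auto simp: rch_def)
qed

lemma rch_0: "rch E img 0 j j" by (simp add: rch_def)

lemma rch_step:
  assumes "finite E" "w \<in> E" "i \<in> set (map fst (img w))"
  shows "rch E img 1 w i"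
  using assms tp_Suc_pos[OF assms(1), of img 0 i w]
  by (auto simp: rch_def trans_entry_def count_list_0_iff simp flip: neq0_conv)

lemma rch_mult:
  assumes "finite E" "rch E img n h h"
  shows "rch E img (c * n) h h"
proof (induction c)
  case 0 then show ?case by (simp add: rch_0)
next
  case (Suc c) then show ?case using rch_comp[OF assms(1) Suc assms(2)] by (simp add: add.commute)
qed

lemma rep_len: "length (rep n w) = n * length w"
  by (simp add: rep_def length_concat sum_list_replicate)

lemma rep_nth: "t < 2 * n \<Longrightarrow> rep n [u, v] ! t = (if even t then u else v)"
proof (induction n arbitrary: t)
  case 0 then show ?case by simp
next
  case (Suc n)
  have "rep (Suc n) [u, v] = [u, v] @ rep n [u, v]" by (simp add: rep_def)
  show ?case
  proof (cases "t < 2")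
    case True
    then have "t = 0 \<or> t = 1" by auto
    then show ?thesis using \<open>rep (Suc n) [u, v] = [u, v] @ rep n [u, v]\<close> by auto
  next
    case False
    then obtain t' where t': "t = Suc (Suc t')" by (metis add_2_eq_Suc le_add_diff_inverse not_less)
    then show ?thesis using Suc \<open>rep (Suc n) [u, v] = [u, v] @ rep n [u, v]\<close> by auto
  qed
qed

lemma phi_odd_len: "length (phi_odd n y) = 2 * n + 3"
  by (cases y) (simp_all add: phi_odd_def rep_len)

lemma phi_odd_La_even:
  assumes "even t" "t < 2 * n + 3"
  shows "fst (phi_odd n La ! t) = La"
proof -
  have "t = 0 \<or> (2 \<le> t \<and> t < 2 * n + 2) \<or> t = 2 * n + 2"
    using assms by presburger
  then consider "t = 0" | "2 \<le> t" "t < 2 * n + 2" | "t = 2 * n + 2"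
    by blast
  then show ?thesis
  proof cases
    case 1 then show ?thesis by (simp add: phi_odd_def)
  next
    case 2
    then have "t - 2 < 2 * n" "even (t - 2)" using assms by auto
    then show ?thesis using 2 by (simp add: phi_odd_def nth_append rep_len rep_nth)
  next
    case 3 then show ?thesis by (simp add: phi_odd_def nth_append rep_len)
  qed
qed

lemma bf_len: "length (back_forth r x) = 2 * r"
  by (simp add: back_forth_def length_concat sum_list_replicate)

lemma bf_Suc: "back_forth (Suc r) x = [(x, True), (x, False)] @ back_forth r x"
  by (simp add: back_forth_def)

lemma concat_bf_len: "length (concat (map (\<lambda>j. back_forth (h j) (j, 1)) us)) = 2 * sum_list (map h us)"
  by (induction us) (simp_all add: bf_len)

lemma map2_mem:
  assumes "length w = length p" "t < length p"
  shows "(fst (w ! t), fst (p ! t)) \<in> set (map fst (map2 (\<lambda>(z, ori) (ed, _). ((z, ed), ori)) w p))"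
proof -
  have "map fst (map2 (\<lambda>(z, ori) (ed, _). ((z, ed), ori)) w p) ! t = (fst (w ! t), fst (p ! t))"
    using assms by (simp add: split_beta)
  moreover have "t < length (map fst (map2 (\<lambda>(z, ori) (ed, _). ((z, ed), ori)) w p))" using assms by simp
  ultimately show ?thesis by (metis nth_mem)
qed

lemma S_low: "i < M \<Longrightarrow> split_img M n0 e ord (y, (k, i)) = [((y, (k, i + 1)), True)]"
  by (simp add: split_img_def star_img_def phi_def)

definition Cb where "Cb e ord k = concat (map (\<lambda>j. back_forth (e k j + 1) (j, 1)) (ord k))"

lemma star_top: "star_img M n0 e ord (k, M) = back_forth (e k k + 1) (k, 1) @ Cb e ord k
   @ [((k, 2), True), ((k, 2), False), ((k, n0 + 1), True)]"
  by (simp add: star_img_def Cb_def)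

lemma top_mem:
  assumes "t < length (star_img M n0 e ord (k, M))"
  shows "(fst (phi_odd (e k k + 1 + sum_list (map (\<lambda>j. e k j + 1) (ord k))) y ! t),
          fst (star_img M n0 e ord (k, M) ! t)) \<in> set (map fst (split_img M n0 e ord (y, (k, M))))"
proof -
  let ?p = "star_img M n0 e ord (k, M)"
  let ?m = "e k k + 1 + sum_list (map (\<lambda>j. e k j + 1) (ord k))"
  have lp: "length ?p = 2 * ?m + 3"
    using concat_bf_len[of "\<lambda>j. e k j + 1" "ord k"]
    by (simp add: star_top Cb_def bf_len)
  have ph: "phi (length ?p) y = phi_odd ?m y"
    using lp by (simp add: phi_def)
  show ?thesis
    using map2_mem[of "phi_odd ?m y" ?p t] assms ph lp phi_odd_len
    by (simp add: split_img_def Let_def)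
qed

definition mm where "mm e ord k = e k k + 1 + sum_list (map (\<lambda>j. e k j + 1) (ord k))"

lemma star_top_len: "length (star_img M n0 e ord (k, M)) = 2 * mm e ord k + 3"
  using concat_bf_len[of "\<lambda>j. e k j + 1" "ord k"]
  by (simp add: star_top Cb_def bf_len mm_def)

lemma top01:
  assumes "t < 2"
  shows "(fst (phi_odd (mm e ord k) y ! t), (k, 1)) \<in> set (map fst (split_img M n0 e ord (y, (k, M))))"
proof -
  have "fst (star_img M n0 e ord (k, M) ! t) = (k, 1)"
    using assms by (auto simp: star_top bf_Suc less_2_cases_iff)
  then show ?thesis using top_mem[of t M n0 e ord k y] assms star_top_len[of M n0 e ord k]
    by (simp add: mm_def)
qed

lemma topLa2:
  "(La, (k, 2)) \<in> set (map fst (split_img M n0 e ord (La, (k, M))))"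
proof -
  let ?t = "2 * mm e ord k"
  have l: "length (back_forth (e k k + 1) (k, 1) @ Cb e ord k) = ?t"
    using concat_bf_len[of "\<lambda>j. e k j + 1" "ord k"]
    by (simp add: Cb_def bf_len mm_def)
  have "star_img M n0 e ord (k, M) = (back_forth (e k k + 1) (k, 1) @ Cb e ord k) @
     ((k, 2), True) # [((k, 2), False), ((k, n0 + 1), True)]"
    by (simp add: star_top)
  then have "fst (star_img M n0 e ord (k, M) ! ?t) = (k, 2)"
    by (metis l nth_append_length fst_conv)
  moreover have "fst (phi_odd (mm e ord k) La ! ?t) = La"
    by (rule phi_odd_La_even) auto
  ultimately show ?thesis using top_mem[of ?t M n0 e ord k La] star_top_len[of M n0 e ord k]
    by (simp add: mm_def)
qed

lemma topLaj:
  assumes "j \<in> set (ord k)"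
  shows "(La, (j, 1)) \<in> set (map fst (split_img M n0 e ord (La, (k, M))))"
proof -
  obtain us vs where uv: "ord k = us @ j # vs" using split_list[OF assms] by blast
  let ?g = "\<lambda>j. back_forth (e k j + 1) (j, 1)"
  let ?t = "2 * (e k k + 1) + length (concat (map ?g us))"
  have C: "Cb e ord k = concat (map ?g us) @ ?g j @ concat (map ?g vs)"
    by (simp add: Cb_def uv)
  have "star_img M n0 e ord (k, M) = (back_forth (e k k + 1) (k, 1) @ concat (map ?g us)) @
      ((j, 1), True) # ((j, 1), False) # (back_forth (e k j) (j, 1) @ concat (map ?g vs)
      @ [((k, 2), True), ((k, 2), False), ((k, n0 + 1), True)])"
    by (simp add: star_top C bf_Suc)
  then have "fst (star_img M n0 e ord (k, M) ! ?t) = (j, 1)"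
    by (simp add: nth_append bf_len del: append_assoc)
  moreover have "?t < length (star_img M n0 e ord (k, M))"
    unfolding \<open>star_img M n0 e ord (k, M) = _\<close> by (simp add: bf_len)
  moreover have "fst (phi_odd (mm e ord k) La ! ?t) = La"
  proof (rule phi_odd_La_even)
    show "even ?t" using concat_bf_len[of "\<lambda>j. e k j + 1" us] by simp
    show "?t < 2 * mm e ord k + 3" using calculation(2) star_top_len[of M n0 e ord k] by simp
  qed
  ultimately show ?thesis using top_mem[of ?t M n0 e ord k La]
    by (simp add: mm_def)
qed

lemma letter_UNIV: "(UNIV :: letter set) = {La, Lb, Lc, Ld, Le, Lf, Lg}"
proof -
  have "x \<in> {La, Lb, Lc, Ld, Le, Lf, Lg}" for x by (cases x) auto
  then show ?thesis by auto
qed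

lemma fin_bound:
  fixes P :: "'a \<Rightarrow> nat \<Rightarrow> bool"
  assumes "finite A" "\<forall>x\<in>A. \<exists>n. P x n"
  shows "\<exists>D. \<forall>x\<in>A. \<exists>n\<le>D. P x n"
  using assms
proof (induction A rule: finite_induct)
  case empty then show ?case by auto
next
  case (insert a A)
  then obtain D where D: "\<forall>x\<in>A. \<exists>n\<le>D. P x n" by auto
  obtain n where "P a n" using insert by auto
  have "\<exists>k\<le>max D n. P x k" if xin: "x \<in> insert a A" for x
  proof (cases "x = a")
    case True then show ?thesis using \<open>P a n\<close> by (intro exI[of _ n]) auto
  next
    case False
    then obtain k where "k \<le> D" "P x k" using D xin by auto
    then show ?thesis by (intro exI[of _ k]) auto
  qed
  then show ?case by blast
qed

theorem mainTheorem8: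
  fixes lam :: real and m N n0 p M :: nat
    and s :: "nat \<Rightarrow> real" and e :: "nat \<Rightarrow> nat \<Rightarrow> nat" and ord :: "nat \<Rightarrow> nat list"
  assumes "perron lam"
    and "m \<ge> 1"
    and "\<forall>k<m. s k \<in> ring_of_integers lam \<and> s k > 0"
    and "0 < n0" and "n0 < N"
    and "\<exists>y \<in> ring_of_integers lam. lam ^ N - lam ^ n0 = 2 * y"
    and "M = p * (N - n0) + N"
    and "\<forall>k<m. lam ^ M * s k =
            (\<Sum>i<m. (2 * real (e k i) + 2) * s i) + 2 * lam * s k + lam ^ n0 * s k"
    and "\<forall>k<m. distinct (ord k) \<and> set (ord k) = {j. j < m \<and> j \<noteq> k}"
  shows "mixing (split_edges m M) (split_img M n0 e ord)"
proof -
  define E where "E = split_edges m M"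
  define S where "S = split_img M n0 e ord"
  have M2: "2 \<le> M" using assms(4,5,7) by auto
  have e2: "Suc (Suc (M - 2)) = M" using M2 by simp
  have m0: "0 < m" using assms(2) by auto
  have "star_edges m M \<subseteq> {..<m} \<times> {..M}" by (auto simp: star_edges_def)
  then have "finite (star_edges m M)" by (rule finite_subset) auto
  then have finE: "finite E" by (simp add: E_def split_edges_def letter_UNIV)
  have memE: "(y, (k, i)) \<in> E \<longleftrightarrow> k < m \<and> 1 \<le> i \<and> i \<le> M" for y k i
    by (simp add: E_def split_edges_def star_edges_def)
  have chain: "rch E S d (y, (k, i)) (y, (k, i + d))" if "k < m" "1 \<le> i" "i + d \<le> M" for d y k i
    using that
  proof (induction d)
    case 0 then show ?case by (simp add: rch_0)
  next
    case (Suc d)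
    then have "rch E S d (y, (k, i)) (y, (k, i + d))" by simp
    moreover have "rch E S 1 (y, (k, i + d)) (y, (k, i + Suc d))"
      using Suc.prems by (intro rch_step finE) (auto simp: memE S_def S_low)
    ultimately show ?case using rch_comp[OF finE] by fastforce
  qed
  have top: "rch E S 1 (y, (k, M)) z" if "k < m" "z \<in> set (map fst (S (y, (k, M))))" for y k z
    using that M2 by (intro rch_step finE) (auto simp: memE)
  define reach where "reach j i \<longleftrightarrow> (\<exists>n. rch E S n j i)" for j i
  have rtrans: "reach a c" if "reach a b" "reach b c" for a b c
    using that rch_comp[OF finE] unfolding reach_def by blast
  have up: "reach (y, (k, i)) (y, (k, M))" if "k < m" "1 \<le> i" "i \<le> M" for y k i
    using chain[where k=k and i=i and d="M - i" and y=y] that unfolding reach_def by auto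
  have up1: "reach (y, (k, 1)) (y, (k, i))" if "k < m" "1 \<le> i" "i \<le> M" for y k i
    using chain[where k=k and i=1 and d="i - 1" and y=y] that unfolding reach_def by auto
  have st01: "reach (y, (k, M)) (z, (k, 1))"
    if "k < m" "t < 2" "z = fst (phi_odd (mm e ord k) y ! t)" for y k z t
    using top[OF that(1) top01[OF that(2), of e ord k y M n0, folded S_def]] that(3)
    unfolding reach_def by auto
  have lt: "reach (y, (k, M)) (z, (k, M))"
    if "k < m" "t < 2" "z = fst (phi_odd (mm e ord k) y ! t)" for y k z t
    using rtrans[OF st01[OF that] up[where y=z and k=k and i=1]] that M2 by auto
  have toLa: "reach (y, (k, M)) (La, (k, M))" if "k < m" for y k
  proof -
    have aa: "reach (La, (k, M)) (La, (k, M))" unfolding reach_def by (meson rch_0)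
    have d: "reach (Ld, (k, M)) (La, (k, M))" using lt[where t=0 and y=Ld and z=La, OF that] by (simp add: phi_odd_def)
    have f: "reach (Lf, (k, M)) (La, (k, M))" using lt[where t=0 and y=Lf and z=La, OF that] by (simp add: phi_odd_def)
    have b: "reach (Lb, (k, M)) (La, (k, M))" using rtrans[OF lt[where t=1 and y=Lb and z=Ld, OF that] d] by (simp add: phi_odd_def)
    have c: "reach (Lc, (k, M)) (La, (k, M))" using rtrans[OF lt[where t=1 and y=Lc and z=Lf, OF that] f] by (simp add: phi_odd_def)
    have e': "reach (Le, (k, M)) (La, (k, M))" using rtrans[OF lt[where t=0 and y=Le and z=Lc, OF that] c] by (simp add: phi_odd_def)
    have g: "reach (Lg, (k, M)) (La, (k, M))" using rtrans[OF lt[where t=1 and y=Lg and z=Le, OF that] e'] by (simp add: phi_odd_def)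
    show ?thesis using aa b c d e' f g by (cases y) auto
  qed
  have fromLa: "reach (La, (k, M)) (z, (k, 1))" if "k < m" for z k
  proof -
    have a: "reach (La, (k, M)) (La, (k, 1))" using st01[where t=0 and y=La and z=La, OF that] by (simp add: phi_odd_def)
    have g: "reach (La, (k, M)) (Lg, (k, 1))" using st01[where t=1 and y=La and z=Lg, OF that] by (simp add: phi_odd_def)
    have gM: "reach (La, (k, M)) (Lg, (k, M))" using lt[where t=1 and y=La and z=Lg, OF that] by (simp add: phi_odd_def)
    have e': "reach (La, (k, M)) (Le, (k, 1))" using rtrans[OF gM st01[where t=1 and y=Lg and z=Le, OF that]] by (simp add: phi_odd_def)
    have b: "reach (La, (k, M)) (Lb, (k, 1))" using rtrans[OF gM st01[where t=0 and y=Lg and z=Lb, OF that]] by (simp add: phi_odd_def)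
    have eM: "reach (La, (k, M)) (Le, (k, M))" using rtrans[OF gM lt[where t=1 and y=Lg and z=Le, OF that]] by (simp add: phi_odd_def)
    have bM: "reach (La, (k, M)) (Lb, (k, M))" using rtrans[OF gM lt[where t=0 and y=Lg and z=Lb, OF that]] by (simp add: phi_odd_def)
    have c: "reach (La, (k, M)) (Lc, (k, 1))" using rtrans[OF eM st01[where t=0 and y=Le and z=Lc, OF that]] by (simp add: phi_odd_def)
    have cM: "reach (La, (k, M)) (Lc, (k, M))" using rtrans[OF eM lt[where t=0 and y=Le and z=Lc, OF that]] by (simp add: phi_odd_def)
    have f: "reach (La, (k, M)) (Lf, (k, 1))" using rtrans[OF cM st01[where t=1 and y=Lc and z=Lf, OF that]] by (simp add: phi_odd_def)
    have d: "reach (La, (k, M)) (Ld, (k, 1))" using rtrans[OF bM st01[where t=1 and y=Lb and z=Ld, OF that]] by (simp add: phi_odd_def)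
    show ?thesis using a b c d e' f g by (cases z) auto
  qed
  have cross: "reach (La, (k, M)) (La, (j, 1))" if "k < m" "j < m" for k j
  proof (cases "j = k")
    case True then show ?thesis using st01[where t=0 and y=La and z=La, OF that(1)] by (simp add: phi_odd_def)
  next
    case False
    then have "j \<in> set (ord k)" using assms(9) that by auto
    then show ?thesis using top[OF that(1) topLaj[of j ord k M n0 e, folded S_def]]
      unfolding reach_def by auto
  qed
  define h where "h = (La, (0::nat, 2::nat))"
  have hE: "h \<in> E" using M2 m0 by (simp add: h_def memE)
  have toh: "reach x h" if "x \<in> E" for x
  proof -
    obtain y k i where x: "x = (y, (k, i))" by (metis prod.exhaust)
    then have k: "k < m" "1 \<le> i" "i \<le> M" using that memE by auto
    have "reach x (La, (k, M))" using rtrans[OF up[OF k] toLa[OF k(1)]] x by simp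
    moreover have "reach (La, (k, M)) h"
      using rtrans[OF cross[OF k(1) m0] up1[where y=La and k=0 and i=2, OF m0]] M2 by (simp add: h_def)
    ultimately show ?thesis using rtrans by blast
  qed
  have fromh: "reach h x" if "x \<in> E" for x
  proof -
    obtain y k i where x: "x = (y, (k, i))" by (metis prod.exhaust)
    then have k: "k < m" "1 \<le> i" "i \<le> M" using that memE by auto
    have "reach h (La, (0, M))" using up[where y=La and k=0 and i=2, OF m0] M2 by (simp add: h_def)
    moreover have "reach (La, (0, M)) (La, (k, M))"
      using rtrans[OF cross[OF m0 k(1)] up[where y=La and k=k and i=1, OF k(1)]] M2 by simp
    moreover have "reach (La, (k, M)) x"
      using rtrans[OF fromLa[OF k(1)] up1[OF k]] x by simp
    ultimately show ?thesis using rtrans by blast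
  qed
  have loop1: "rch E S (M - 1) h h"
  proof -
    have "rch E S (M - 2) h (La, (0, M))" using chain[where k=0 and i=2 and d="M - 2" and y=La, OF m0] M2 by (simp add: h_def e2)
    moreover have "rch E S 1 (La, (0, M)) h"
      using top[OF m0 topLa2[of 0 M n0 e ord, folded S_def]] by (simp add: h_def)
    ultimately have "rch E S (1 + (M - 2)) h h" using rch_comp[OF finE] by blast
    moreover have "1 + (M - 2) = M - 1" using M2 by simp
    ultimately show ?thesis by simp
  qed
  have loop2: "rch E S M h h"
  proof -
    have "rch E S (M - 2) h (La, (0, M))" using chain[where k=0 and i=2 and d="M - 2" and y=La, OF m0] M2 by (simp add: h_def e2)
    moreover have "rch E S 1 (La, (0, M)) (La, (0, 1))"
      using top[OF m0 top01[of 0 e ord 0 La M n0, folded S_def]] by (simp add: phi_odd_def)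
    moreover have "rch E S 1 (La, (0, 1)) h" using chain[where k=0 and i=1 and d=1 and y=La, OF m0] M2 by (simp add: h_def numeral_2_eq_2)
    ultimately have "rch E S (1 + (1 + (M - 2))) h h" using rch_comp[OF finE] by blast
    then show ?thesis using e2 by simp
  qed
  define T0 where "T0 = (M - 1) * (M - 1)"
  have pad: "rch E S t h h" if "T0 \<le> t" for t
  proof -
    obtain K where K: "M = K + 2" using M2 by (metis add.commute le_add_diff_inverse)
    define q where "q = t div (K + 1)"
    define r where "r = t mod (K + 1)"
    have tq: "t = q * (K + 1) + r" unfolding q_def r_def by (metis div_mult_mod_eq)
    have rl: "r < K + 1" by (simp add: r_def)
    have "K + 1 \<le> q"
    proof (rule ccontr)
      assume "\<not> K + 1 \<le> q"
      then have "q \<le> K" by simp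
      then have "q * (K + 1) \<le> K * (K + 1)" by (rule mult_le_mono1)
      then have "q * (K + 1) + r < (K + 1) * (K + 1)" using rl by simp
      then show False using that tq T0_def K by simp
    qed
    define d where "d = q - r"
    then have d: "q = r + d" using \<open>K + 1 \<le> q\<close> rl by simp
    have m1: "M - 1 = K + 1" using K by simp
    have t2: "t = d * (M - 1) + r * M"
      unfolding m1 K tq d by (simp add: algebra_simps)
    have "rch E S (r * M + d * (M - 1)) h h"
      using rch_comp[OF finE rch_mult[OF finE loop1, of d] rch_mult[OF finE loop2, of r]] .
    then show ?thesis using t2 by (simp add: add.commute)
  qed
  have "\<forall>x\<in>E. \<exists>n. rch E S n x h" using toh unfolding reach_def by blast
  from fin_bound[OF finE this] obtain D1 where D1: "\<forall>x\<in>E. \<exists>n\<le>D1. rch E S n x h" by blast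
  have "\<forall>x\<in>E. \<exists>n. rch E S n h x" using fromh unfolding reach_def by blast
  from fin_bound[OF finE this] obtain D2 where D2: "\<forall>x\<in>E. \<exists>n\<le>D2. rch E S n h x" by blast
  define L where "L = D1 + D2 + T0"
  have "0 < L" using M2 by (simp add: L_def T0_def)
  moreover have "0 < trans_pow E S L i j" if ij: "i \<in> E" "j \<in> E" for i j
  proof -
    obtain n1 where n1: "n1 \<le> D1" "rch E S n1 j h" using D1 ij(2) by blast
    obtain n2 where n2: "n2 \<le> D2" "rch E S n2 h i" using D2 ij(1) by blast
    have "T0 \<le> L - n1 - n2" using n1(1) n2(1) by (simp add: L_def)
    then have p: "rch E S (L - n1 - n2) h h" by (rule pad)
    have "rch E S ((L - n1 - n2) + n1) j h" by (rule rch_comp[OF finE n1(2) p])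
    then have "rch E S (n2 + ((L - n1 - n2) + n1)) j i" by (rule rch_comp[OF finE _ n2(2)])
    moreover have "n2 + ((L - n1 - n2) + n1) = L" using n1(1) n2(1) by (simp add: L_def)
    ultimately have "rch E S L j i" by simp
    then show ?thesis by (simp add: rch_def)
  qed
  ultimately show ?thesis unfolding mixing_def E_def[symmetric] S_def[symmetric] by blast
qed

end
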